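(* Let $(X,\delta,c)$ be an accepting automaton over $\Sigma$ and let $\mu\mathrm{PL}(\delta,c)$ be as in the context. For every $x\in X$, the language $L(x,c)=\{u\in\Sigma^\ast\mid\delta(x)(u)\in c\}$ belongs to $\mu\mathrm{PL}(\delta,c)$, i.e. there is a state $\mathcal{U}$ of $\mu\mathrm{PL}(\delta,c)$ with $L(\mathcal{U})=L(x,c)$.
   Context: $\Sigma$ is a finite alphabet, $\Sigma^\ast$ the free monoid with empty word $\epsilon$, $u^r$ the reversal of $u$. An accepting automaton is $(X,\delta,c)$ with $\delta:X\to X^\Sigma$ (extended to words by $\delta(x)(\epsilon)=x$, $\delta(x)(wa)=\delta(\delta(x)(w))(a)$) and $c\subseteq X$. Define $\widehat{\delta}(U)(a)=\{x\mid\delta(x)(a)\in U\}$ for $U\subseteq X$, extended to words, so $\widehat{\delta}(U)(w)=\{x\mid\delta(x)(w^r)\in U\}$. Let $\langle c\rangle=\{\widehat{\delta}(c)(w)\mid w\in\Sigma^\ast\}$ and $u\approx v$ iff $\widehat{\delta}(U)(u)=\widehat{\delta}(U)(v)$ for all $U\in\langle c\rangle$. $\mu\mathrm{PL}(\delta,c)$ has state space $P(\Sigma^\ast/{\approx})$, transition $\widehat{\sigma}(\mathcal{U})(u)=\{[w]\mid[wu^r]\in\mathcal{U}\}$ and final states $\{\mathcal{U}\mid[\epsilon]\in\mathcal{U}\}$; $L(\mathcal{U})=\{u\mid[\epsilon]\in\widehat{\sigma}(\mathcal{U})(u)\}$. *)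

theory Defs
  imports Main
begin

text \<open>Words over the alphabet 'a are lists; the empty word is []; u^r is rev u.
  An accepting automaton (X, delta, c) is given by delta :: 'x => 'a => 'x and c :: 'x set.\<close>

definition dstar :: "('x \<Rightarrow> 'a \<Rightarrow> 'x) \<Rightarrow> 'x \<Rightarrow> 'a list \<Rightarrow> 'x" where
  "dstar \<delta> x w = foldl \<delta> x w"

definition hatd :: "('x \<Rightarrow> 'a \<Rightarrow> 'x) \<Rightarrow> 'x set \<Rightarrow> 'a \<Rightarrow> 'x set" where
  "hatd \<delta> U a = {x. \<delta> x a \<in> U}"

text \<open>Extension to words: hatd(U)(eps) = U, hatd(U)(wa) = hatd(hatd(U)(w))(a),
  so that hatd(U)(w) = {x | delta(x)(w^r) in U}.\<close>
definition hatdw :: "('x \<Rightarrow> 'a \<Rightarrow> 'x) \<Rightarrow> 'x set \<Rightarrow> 'a list \<Rightarrow> 'x set" where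
  "hatdw \<delta> U w = foldl (hatd \<delta>) U w"

definition gen :: "('x \<Rightarrow> 'a \<Rightarrow> 'x) \<Rightarrow> 'x set \<Rightarrow> 'x set set" where
  "gen \<delta> c = {hatdw \<delta> c w | w. True}"

definition approx :: "('x \<Rightarrow> 'a \<Rightarrow> 'x) \<Rightarrow> 'x set \<Rightarrow> ('a list \<times> 'a list) set" where
  "approx \<delta> c = {(u, v). \<forall>U \<in> gen \<delta> c. hatdw \<delta> U u = hatdw \<delta> U v}"

definition cls :: "('x \<Rightarrow> 'a \<Rightarrow> 'x) \<Rightarrow> 'x set \<Rightarrow> 'a list \<Rightarrow> 'a list set" where
  "cls \<delta> c w = approx \<delta> c `` {w}"

text \<open>Sigma*/~ ; states of muPL(delta,c) are subsets of it.\<close>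
definition quot :: "('x \<Rightarrow> 'a \<Rightarrow> 'x) \<Rightarrow> 'x set \<Rightarrow> 'a list set set" where
  "quot \<delta> c = UNIV // approx \<delta> c"

definition sigmahat :: "('x \<Rightarrow> 'a \<Rightarrow> 'x) \<Rightarrow> 'x set \<Rightarrow> 'a list set set \<Rightarrow> 'a list \<Rightarrow> 'a list set set" where
  "sigmahat \<delta> c \<U> u = {cls \<delta> c w | w. cls \<delta> c (w @ rev u) \<in> \<U>}"

definition muPL_lang :: "('x \<Rightarrow> 'a \<Rightarrow> 'x) \<Rightarrow> 'x set \<Rightarrow> 'a list set set \<Rightarrow> 'a list set" where
  "muPL_lang \<delta> c \<U> = {u. cls \<delta> c [] \<in> sigmahat \<delta> c \<U> u}"

definition aut_lang :: "('x \<Rightarrow> 'a \<Rightarrow> 'x) \<Rightarrow> 'x set \<Rightarrow> 'x \<Rightarrow> 'a list set" where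
  "aut_lang \<delta> c x = {u. dstar \<delta> x u \<in> c}"

end

theory Submission
  imports Defs
begin

lemma hatdw_append: "hatdw d U (w @ v) = hatdw d (hatdw d U w) v"
  by (simp add: hatdw_def)

lemma hatdw_char: "y \<in> hatdw d U w \<longleftrightarrow> dstar d y (rev w) \<in> U"
proof (induction w arbitrary: y rule: rev_induct)
  case Nil
  then show ?case by (simp add: hatdw_def dstar_def)
next
  case (snoc a w)
  have "y \<in> hatdw d U (w @ [a]) \<longleftrightarrow> d y a \<in> hatdw d U w"
    by (simp add: hatdw_def hatd_def)
  also have "\<dots> \<longleftrightarrow> dstar d (d y a) (rev w) \<in> U" using snoc by simp
  finally show ?case by (simp add: dstar_def)
qed

lemma c_gen: "c \<in> gen d c"
  unfolding gen_def by (rule CollectI, rule exI[of _ "[]"]) (simp add: hatdw_def)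

lemma cls_eq: "cls d c w = cls d c v \<Longrightarrow> (w, v) \<in> approx d c"
proof -
  assume "cls d c w = cls d c v"
  moreover have "v \<in> cls d c v" by (simp add: cls_def approx_def)
  ultimately have "v \<in> cls d c w" by simp
  then show ?thesis by (simp add: cls_def)
qed

lemma approx_c: "(w, v) \<in> approx d c \<Longrightarrow> hatdw d c w = hatdw d c v"
  using c_gen by (auto simp: approx_def)

lemma approx_app: "(w, v) \<in> approx d c \<Longrightarrow> (w @ u, v @ u) \<in> approx d c"
  by (auto simp: approx_def hatdw_append)

theorem mainTheorem7:
  fixes \<delta> :: "'x \<Rightarrow> 'a::finite \<Rightarrow> 'x" and c :: "'x set" and x :: 'x
  shows "\<exists>\<U>. \<U> \<subseteq> quot \<delta> c \<and> muPL_lang \<delta> c \<U> = aut_lang \<delta> c x"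
proof -
  define U where "U = {cls \<delta> c w | w. x \<in> hatdw \<delta> c w}"
  have mem: "cls \<delta> c v \<in> U \<longleftrightarrow> x \<in> hatdw \<delta> c v" for v
  proof
    assume "cls \<delta> c v \<in> U"
    then obtain w where "cls \<delta> c v = cls \<delta> c w" "x \<in> hatdw \<delta> c w" by (auto simp: U_def)
    then show "x \<in> hatdw \<delta> c v" using cls_eq approx_c by metis
  qed (auto simp: U_def)
  have "U \<subseteq> quot \<delta> c"
    by (auto simp: U_def quot_def cls_def intro!: quotientI)
  moreover have "muPL_lang \<delta> c U = aut_lang \<delta> c x"
  proof (rule set_eqI, rule iffI)
    fix u assume "u \<in> muPL_lang \<delta> c U"
    then obtain w where w: "cls \<delta> c [] = cls \<delta> c w" "cls \<delta> c (w @ rev u) \<in> U"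
      by (auto simp: muPL_lang_def sigmahat_def)
    have "(w @ rev u, [] @ rev u) \<in> approx \<delta> c"
      using approx_app cls_eq[OF w(1)[symmetric]] by blast
    then have "hatdw \<delta> c (w @ rev u) = hatdw \<delta> c (rev u)" using approx_c by fastforce
    then show "u \<in> aut_lang \<delta> c x" using w(2) mem hatdw_char
      by (metis aut_lang_def mem_Collect_eq rev_rev_ident)
  next
    fix u assume "u \<in> aut_lang \<delta> c x"
    then have "cls \<delta> c ([] @ rev u) \<in> U" using mem[of "rev u"] hatdw_char[of x \<delta> c "rev u"]
      by (simp add: aut_lang_def)
    then show "u \<in> muPL_lang \<delta> c U" by (auto simp: muPL_lang_def sigmahat_def)
  qed
  ultimately show ?thesis by blast
qed

end
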